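(* Consider the following model. A principal P and an agent A interact over two periods $t\in\{1,2\}$. States $\omega_t\in\{0,1\}$ satisfy $\Pr[\omega_1=1]=\mu_0\in(0,1)$ and $\Pr[\omega_2=\omega\mid\omega_1=\omega]=\rho\in(1/2,1)$. In each period A chooses $e_t\in\{0,1\}$; if $e_t=1$ he observes $\omega_t$, and here if $e_t=0$ he observes nothing (i.e., the free-revelation probability is $\pi=0$). A reports $r_t\in\{\varnothing,\omega_t\}$ if he observed $\omega_t$, else $r_t=\varnothing$. P chooses $x=\hat x(r_1,r_2)$ at the end of period 2. Payoffs: P gets $\mathbb{1}[x=\omega_2]-k(e_1+e_2)$, A gets $x-c(e_1+e_2)$, $c,k>0$; A best-responds, following the recommendation and disclosing when indifferent. Let $\kappa=k/(1-\pi)=k$, $\gamma=c/(1-\pi)=c$, $\mu_2(\varnothing)=\rho\mu_0+(1-\rho)(1-\mu_0)$, and assume $\kappa\in(1-\rho,\min\{\mu_2(\varnothing),1-\mu_2(\varnothing)\}]$ and $\gamma\le\mu_2(\varnothing)$. Then the mechanism with $\sigma_1=0$, $\sigma_2(r_1)=\mathbb{1}[r_1=\varnothing]$ and $\hat x(r_1,r_2)=\mathbb{1}[r_1=\varnothing]\mathbb{1}[r_2=1]$ generates the same outcomes as the baseline mechanism, and therefore it is optimal.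
   Context: The baseline mechanism is the one P would choose if she controlled testing directly and observed all results: for this range of $\kappa$ it does not test in period 1, tests in period 2 when no period-1 result was obtained, and assigns efficiently ($x=1$ iff the posterior probability of $\omega_2=1$ is at least $1/2$); with $\pi=0$ it therefore tests only in period 2 and sets $x=\omega_2$. *)

theory Defs
  imports Complex_Main
begin

text \<open>Two-period testing model with free-revelation probability pi = 0.
  States omega_1, omega_2 are booleans (True = 1). Reports are "bool option":
  None is the empty report, Some w discloses the observed state w.\<close>

type_synonym report = "bool option"

record mech =
  sig1 :: real
  sig2 :: "report \<Rightarrow> real"
  xhat :: "report \<Rightarrow> report \<Rightarrow> bool"

definition valid_mech :: "mech \<Rightarrow> bool" where
  "valid_mech M \<longleftrightarrow> 0 \<le> sig1 M \<and> sig1 M \<le> 1 \<and> (\<forall>r. 0 \<le> sig2 M r \<and> sig2 M r \<le> 1)"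

text \<open>A (pure) strategy of the agent. a_t is the recommendation received in period t,
  o_t the observation in period t (None if no test). The disclosure choice decides whether
  the report is the observation or the empty report, so r_t \<in> {empty, omega_t} if observed
  and r_t = empty otherwise.\<close>
record strat =
  act1  :: "bool \<Rightarrow> bool"
  disc1 :: "bool \<Rightarrow> bool option \<Rightarrow> bool"
  act2  :: "bool \<Rightarrow> bool option \<Rightarrow> bool \<Rightarrow> bool"
  disc2 :: "bool \<Rightarrow> bool option \<Rightarrow> bool \<Rightarrow> bool option \<Rightarrow> bool"

definition bprob :: "real \<Rightarrow> bool \<Rightarrow> real" where
  "bprob p b = (if b then p else 1 - p)"

definition prior :: "real \<Rightarrow> real \<Rightarrow> bool \<Rightarrow> bool \<Rightarrow> real" where
  "prior mu0 rho w1 w2 = bprob mu0 w1 * (if w2 = w1 then rho else 1 - rho)"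

definition mu2_empty :: "real \<Rightarrow> real \<Rightarrow> real" where
  "mu2_empty mu0 rho = rho * mu0 + (1 - rho) * (1 - mu0)"

definition expect :: "real \<Rightarrow> real \<Rightarrow> mech \<Rightarrow> strat \<Rightarrow>
    (bool \<Rightarrow> bool \<Rightarrow> bool \<Rightarrow> bool \<Rightarrow> bool \<Rightarrow> real) \<Rightarrow> real" where
  "expect mu0 rho M s f =
    (\<Sum>w1\<in>UNIV. \<Sum>w2\<in>UNIV. \<Sum>a1\<in>UNIV. \<Sum>a2\<in>UNIV.
      (let e1 = act1 s a1;
           o1 = (if e1 then Some w1 else None);
           r1 = (if disc1 s a1 o1 then o1 else None);
           e2 = act2 s a1 o1 a2;
           o2 = (if e2 then Some w2 else None);
           r2 = (if disc2 s a1 o1 a2 o2 then o2 else None);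
           x = xhat M r1 r2
       in prior mu0 rho w1 w2 * bprob (sig1 M) a1 * bprob (sig2 M r1) a2 * f w1 w2 e1 e2 x))"

definition UA :: "real \<Rightarrow> real \<Rightarrow> real \<Rightarrow> mech \<Rightarrow> strat \<Rightarrow> real" where
  "UA mu0 rho c M s = expect mu0 rho M s
     (\<lambda>w1 w2 e1 e2 x. of_bool x - c * (of_bool e1 + of_bool e2))"

definition UP :: "real \<Rightarrow> real \<Rightarrow> real \<Rightarrow> mech \<Rightarrow> strat \<Rightarrow> real" where
  "UP mu0 rho k M s = expect mu0 rho M s
     (\<lambda>w1 w2 e1 e2 x. of_bool (x = w2) - k * (of_bool e1 + of_bool e2))"

definition best_response :: "real \<Rightarrow> real \<Rightarrow> real \<Rightarrow> mech \<Rightarrow> strat \<Rightarrow> bool" where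
  "best_response mu0 rho c M s \<longleftrightarrow> (\<forall>s'. UA mu0 rho c M s' \<le> UA mu0 rho c M s)"

definition outcome_prob :: "real \<Rightarrow> real \<Rightarrow> mech \<Rightarrow> strat \<Rightarrow>
    bool \<times> bool \<times> bool \<times> bool \<times> bool \<Rightarrow> real" where
  "outcome_prob mu0 rho M s oc = expect mu0 rho M s
     (\<lambda>w1 w2 e1 e2 x. of_bool ((w1, w2, e1, e2, x) = oc))"

text \<open>Outcome distribution of the baseline mechanism in this parameter range (pi = 0):
  no test in period 1, test in period 2, x = omega_2.\<close>
definition baseline_prob :: "real \<Rightarrow> real \<Rightarrow> bool \<times> bool \<times> bool \<times> bool \<times> bool \<Rightarrow> real" where
  "baseline_prob mu0 rho oc = (case oc of (w1, w2, e1, e2, x) \<Rightarrow>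
     prior mu0 rho w1 w2 * of_bool (\<not> e1 \<and> e2 \<and> x = w2))"

definition obedient :: strat where
  "obedient = \<lparr>act1 = (\<lambda>a. a), disc1 = (\<lambda>_ _. True),
               act2 = (\<lambda>_ _ a. a), disc2 = (\<lambda>_ _ _ _. True)\<rparr>"

definition Mstar :: mech where
  "Mstar = \<lparr>sig1 = 0, sig2 = (\<lambda>r1. if r1 = None then 1 else 0),
            xhat = (\<lambda>r1 r2. r1 = None \<and> r2 = Some True)\<rparr>"

end

theory Submission
  imports Defs
begin

lemma sumb: "(\<Sum>b\<in>(UNIV::bool set). f b) = f True + f False"
  by (simp add: UNIV_bool add.commute)

definition o1f :: "strat \<Rightarrow> bool \<Rightarrow> bool \<Rightarrow> report" where
  "o1f s a1 w1 = (if act1 s a1 then Some w1 else None)"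
definition r1f :: "strat \<Rightarrow> bool \<Rightarrow> bool \<Rightarrow> report" where
  "r1f s a1 w1 = (if disc1 s a1 (o1f s a1 w1) then o1f s a1 w1 else None)"
definition e2f :: "strat \<Rightarrow> bool \<Rightarrow> bool \<Rightarrow> bool \<Rightarrow> bool" where
  "e2f s a1 w1 a2 = act2 s a1 (o1f s a1 w1) a2"
definition o2f :: "strat \<Rightarrow> bool \<Rightarrow> bool \<Rightarrow> bool \<Rightarrow> bool \<Rightarrow> report" where
  "o2f s a1 w1 a2 w2 = (if e2f s a1 w1 a2 then Some w2 else None)"
definition r2f :: "strat \<Rightarrow> bool \<Rightarrow> bool \<Rightarrow> bool \<Rightarrow> bool \<Rightarrow> report" where
  "r2f s a1 w1 a2 w2 = (if disc2 s a1 (o1f s a1 w1) a2 (o2f s a1 w1 a2 w2) then o2f s a1 w1 a2 w2 else None)"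
definition xf :: "mech \<Rightarrow> strat \<Rightarrow> bool \<Rightarrow> bool \<Rightarrow> bool \<Rightarrow> bool \<Rightarrow> bool" where
  "xf M s a1 w1 a2 w2 = xhat M (r1f s a1 w1) (r2f s a1 w1 a2 w2)"

lemma expect_alt:
  "expect mu0 rho M s f =
   (\<Sum>a1\<in>UNIV. bprob (sig1 M) a1 * (\<Sum>w1\<in>UNIV. \<Sum>a2\<in>UNIV. bprob (sig2 M (r1f s a1 w1)) a2 *
     (\<Sum>w2\<in>UNIV. prior mu0 rho w1 w2 * f w1 w2 (act1 s a1) (e2f s a1 w1 a2) (xf M s a1 w1 a2 w2))))"
proof -
  have gen: "\<And>(P::bool\<Rightarrow>bool\<Rightarrow>real) (p1::bool\<Rightarrow>real) (q::bool\<Rightarrow>bool\<Rightarrow>bool\<Rightarrow>real) (h::bool\<Rightarrow>bool\<Rightarrow>bool\<Rightarrow>bool\<Rightarrow>real).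
    (\<Sum>w1\<in>UNIV. \<Sum>w2\<in>UNIV. \<Sum>a1\<in>UNIV. \<Sum>a2\<in>UNIV. P w1 w2 * p1 a1 * q a1 w1 a2 * h w1 w2 a1 a2)
    = (\<Sum>a1\<in>UNIV. p1 a1 * (\<Sum>w1\<in>UNIV. \<Sum>a2\<in>UNIV. q a1 w1 a2 * (\<Sum>w2\<in>UNIV. P w1 w2 * h w1 w2 a1 a2)))"
    by (simp only: sumb) (simp add: algebra_simps)
  show ?thesis
    unfolding expect_def Let_def
    apply (subst gen[symmetric])
    apply (simp only: xf_def r2f_def o2f_def e2f_def r1f_def o1f_def)
    done
qed

lemma wavg:
  fixes F :: "bool \<Rightarrow> real"
  assumes "0 \<le> p" "p \<le> 1" "\<And>a. F a \<le> B"
  shows "(\<Sum>a\<in>UNIV. bprob p a * F a) \<le> B"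
proof -
  have "p * F True \<le> p * B" using assms by (simp add: mult_left_mono)
  moreover have "(1 - p) * F False \<le> (1 - p) * B" using assms by (simp add: mult_left_mono)
  ultimately show ?thesis by (simp add: sumb bprob_def algebra_simps)
qed

lemma bprob_nonneg: "0 \<le> p \<Longrightarrow> p \<le> 1 \<Longrightarrow> 0 \<le> bprob p b"
  by (simp add: bprob_def)

lemma prior_avg:
  fixes G :: "bool \<Rightarrow> real"
  assumes "0 \<le> mu0" "mu0 \<le> 1" "0 \<le> rho" "rho \<le> 1" "\<And>w. G w \<le> B"
  shows "(\<Sum>w2\<in>UNIV. prior mu0 rho w1 w2 * G w2) \<le> bprob mu0 w1 * B"
proof -
  have b: "0 \<le> bprob mu0 w1" using assms by (simp add: bprob_def)
  have "rho * G w1 \<le> rho * B" using assms by (simp add: mult_left_mono)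
  moreover have "(1 - rho) * G (\<not> w1) \<le> (1 - rho) * B" using assms by (simp add: mult_left_mono)
  ultimately have "rho * G w1 + (1 - rho) * G (\<not> w1) \<le> B" by (simp add: algebra_simps)
  then have "bprob mu0 w1 * (rho * G w1 + (1 - rho) * G (\<not> w1)) \<le> bprob mu0 w1 * B"
    using b by (simp add: mult_left_mono)
  moreover have "(\<Sum>w2\<in>UNIV. prior mu0 rho w1 w2 * G w2) = bprob mu0 w1 * (rho * G w1 + (1 - rho) * G (\<not> w1))"
    by (cases w1) (simp_all add: sumb prior_def algebra_simps)
  ultimately show ?thesis by simp
qed

lemma part3:
  fixes mu0 rho k :: real
  assumes vm: "valid_mech M" and p: "0 < mu0" "mu0 < 1" "1/2 < rho" "rho < 1" "0 < k"
    "1 - rho < k" "k \<le> min (mu2_empty mu0 rho) (1 - mu2_empty mu0 rho)"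
  shows "UP mu0 rho k M s \<le> 1 - k"
proof -
  have s1: "0 \<le> sig1 M" "sig1 M \<le> 1" and s2: "\<And>r. 0 \<le> sig2 M r" "\<And>r. sig2 M r \<le> 1"
    using vm by (auto simp: valid_mech_def)
  have pp: "0 \<le> mu0" "mu0 \<le> 1" "0 \<le> rho" "rho \<le> 1" using p by auto
  show ?thesis
    unfolding UP_def expect_alt
  proof (rule wavg[OF s1])
    fix a1
    show "(\<Sum>w1\<in>UNIV. \<Sum>a2\<in>UNIV. bprob (sig2 M (r1f s a1 w1)) a2 *
            (\<Sum>w2\<in>UNIV. prior mu0 rho w1 w2 *
               (of_bool (xf M s a1 w1 a2 w2 = w2) - k * (of_bool (act1 s a1) + of_bool (e2f s a1 w1 a2)))))
          \<le> 1 - k"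
    proof (cases "act1 s a1")
      case False
      define G where "G a2 w2 = of_bool (xhat M None (if disc2 s a1 None a2 (if act2 s a1 None a2 then Some w2 else None)
         then (if act2 s a1 None a2 then Some w2 else None) else None) = w2) - k * of_bool (act2 s a1 None a2)" for a2 w2
      have eq: "(\<Sum>w1\<in>UNIV. \<Sum>a2\<in>UNIV. bprob (sig2 M (r1f s a1 w1)) a2 *
            (\<Sum>w2\<in>UNIV. prior mu0 rho w1 w2 *
               (of_bool (xf M s a1 w1 a2 w2 = w2) - k * (of_bool (act1 s a1) + of_bool (e2f s a1 w1 a2)))))
         = (\<Sum>w1\<in>UNIV. \<Sum>a2\<in>UNIV. bprob (sig2 M None) a2 *
            (\<Sum>w2\<in>UNIV. prior mu0 rho w1 w2 * G a2 w2))"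
      proof -
        have o1: "\<And>w1. o1f s a1 w1 = None" using False by (simp add: o1f_def)
        have r1: "\<And>w1. r1f s a1 w1 = None" by (simp add: r1f_def o1)
        have e2: "\<And>w1 a2. e2f s a1 w1 a2 = act2 s a1 None a2" by (simp add: e2f_def o1)
        have o2: "\<And>w1 a2 w2. o2f s a1 w1 a2 w2 = (if act2 s a1 None a2 then Some w2 else None)"
          by (simp add: o2f_def e2)
        have x: "\<And>w1 a2 w2. xf M s a1 w1 a2 w2 = xhat M None (if disc2 s a1 None a2 (if act2 s a1 None a2 then Some w2 else None)
         then (if act2 s a1 None a2 then Some w2 else None) else None)"
          by (simp only: xf_def r2f_def r1 o2 o1)
        show ?thesis by (simp only: x r1 e2 False G_def of_bool_eq(1) add_0_left)
      qed
      have gen: "\<And>(P::bool\<Rightarrow>bool\<Rightarrow>real) (q::bool\<Rightarrow>real) (h::bool\<Rightarrow>bool\<Rightarrow>real).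
         (\<Sum>w1\<in>UNIV. \<Sum>a2\<in>UNIV. q a2 * (\<Sum>w2\<in>UNIV. P w1 w2 * h a2 w2))
         = (\<Sum>a2\<in>UNIV. q a2 * (\<Sum>w1\<in>UNIV. \<Sum>w2\<in>UNIV. P w1 w2 * h a2 w2))"
        by (simp only: sumb) (simp add: algebra_simps)
      show ?thesis
        unfolding eq gen
      proof (rule wavg[OF s2])
        fix a2
        show "(\<Sum>w1\<in>UNIV. \<Sum>w2\<in>UNIV. prior mu0 rho w1 w2 * G a2 w2) \<le> 1 - k"
        proof (cases "act2 s a1 None a2")
          case True
          have "\<And>w1. (\<Sum>w2\<in>UNIV. prior mu0 rho w1 w2 * G a2 w2) \<le> bprob mu0 w1 * (1 - k)"
            by (rule prior_avg[OF pp]) (simp add: G_def True)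
          then have "(\<Sum>w1\<in>UNIV. \<Sum>w2\<in>UNIV. prior mu0 rho w1 w2 * G a2 w2) \<le> 
             (\<Sum>w1\<in>UNIV. bprob mu0 w1 * (1 - k))" by (rule sum_mono)
          then show ?thesis by (simp add: sumb bprob_def algebra_simps)
        next
          case False
          show ?thesis using p
            by (cases "xhat M None None") (simp_all add: G_def False sumb prior_def bprob_def mu2_empty_def algebra_simps)
        qed
      qed
    next
      case True
      have "\<And>w1. (\<Sum>a2\<in>UNIV. bprob (sig2 M (r1f s a1 w1)) a2 *
            (\<Sum>w2\<in>UNIV. prior mu0 rho w1 w2 *
               (of_bool (xf M s a1 w1 a2 w2 = w2) - k * (of_bool (act1 s a1) + of_bool (e2f s a1 w1 a2)))))
          \<le> bprob mu0 w1 * (1 - k)"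
      proof -
        fix w1
        show "?thesis w1"
        proof (rule wavg[OF s2])
          fix a2
          show "(\<Sum>w2\<in>UNIV. prior mu0 rho w1 w2 *
               (of_bool (xf M s a1 w1 a2 w2 = w2) - k * (of_bool (act1 s a1) + of_bool (e2f s a1 w1 a2))))
              \<le> bprob mu0 w1 * (1 - k)"
          proof (cases "e2f s a1 w1 a2")
            case True
            show ?thesis by (rule prior_avg[OF pp]) (use p \<open>act1 s a1\<close> True in simp)
          next
            case False
            have x: "\<And>w2. xf M s a1 w1 a2 w2 = xhat M (r1f s a1 w1) None"
              using False by (simp add: xf_def r2f_def o2f_def)
            have b: "0 \<le> bprob mu0 w1" using pp by (simp add: bprob_def)
            have "bprob mu0 w1 * (rho - k) \<le> bprob mu0 w1 * (1 - k)"
              using b p by (simp add: mult_left_mono)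
            moreover have "(\<Sum>w2\<in>UNIV. prior mu0 rho w1 w2 *
               (of_bool (xf M s a1 w1 a2 w2 = w2) - k * (of_bool (act1 s a1) + of_bool (e2f s a1 w1 a2))))
               \<le> bprob mu0 w1 * (rho - k)"
              using p pp b \<open>act1 s a1\<close> False
              using mult_nonneg_nonneg[of "1 - mu0" "2*rho - 1"] unfolding x
              by (cases "xhat M (r1f s a1 w1) None"; cases w1)
                 (simp_all add: sumb prior_def bprob_def algebra_simps mult_left_mono)
            ultimately show ?thesis by linarith
          qed
        qed
      qed
      then have "(\<Sum>w1\<in>UNIV. \<Sum>a2\<in>UNIV. bprob (sig2 M (r1f s a1 w1)) a2 *
            (\<Sum>w2\<in>UNIV. prior mu0 rho w1 w2 *
               (of_bool (xf M s a1 w1 a2 w2 = w2) - k * (of_bool (act1 s a1) + of_bool (e2f s a1 w1 a2)))))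
          \<le> (\<Sum>w1\<in>UNIV. bprob mu0 w1 * (1 - k))" by (rule sum_mono)
      then show ?thesis by (simp add: sumb bprob_def algebra_simps)
    qed
  qed
qed


lemma prior_nonneg: "0 \<le> mu0 \<Longrightarrow> mu0 \<le> 1 \<Longrightarrow> 0 \<le> rho \<Longrightarrow> rho \<le> 1 \<Longrightarrow> 0 \<le> prior mu0 rho w1 w2"
  by (simp add: prior_def bprob_def)

lemma prior_mono:
  fixes f g :: "bool \<Rightarrow> real"
  assumes "0 \<le> mu0" "mu0 \<le> 1" "0 \<le> rho" "rho \<le> 1" "\<And>w2. f w2 \<le> g w2"
  shows "(\<Sum>w2\<in>UNIV. prior mu0 rho w1 w2 * f w2) \<le> (\<Sum>w2\<in>UNIV. prior mu0 rho w1 w2 * g w2)"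
  by (rule sum_mono, rule mult_left_mono) (use assms prior_nonneg in auto)

lemma bprob0: "(\<Sum>a\<in>UNIV. bprob 0 a * (F a::real)) = F False"
  by (simp add: sumb bprob_def)
lemma bprob1: "(\<Sum>a\<in>UNIV. bprob 1 a * (F a::real)) = F True"
  by (simp add: sumb bprob_def)

lemma Mstar_simps: "sig1 Mstar = 0" "sig2 Mstar None = 1" "\<And>w. sig2 Mstar (Some w) = 0"
  by (simp_all add: Mstar_def)

lemma xf_Mstar: "xf Mstar s a1 w1 a2 w2 \<Longrightarrow> e2f s a1 w1 a2 \<and> w2"
  by (auto simp: xf_def Mstar_def r2f_def o2f_def split: if_splits)

lemma part1:
  fixes mu0 rho c :: real
  assumes p: "0 < mu0" "mu0 < 1" "1/2 < rho" "rho < 1" "0 < c" "c \<le> mu2_empty mu0 rho"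
  shows "UA mu0 rho c Mstar s \<le> mu2_empty mu0 rho - c"
proof -
  have pp: "0 \<le> mu0" "mu0 \<le> 1" "0 \<le> rho" "rho \<le> 1" using p by auto
  have bp: "\<And>w. 0 \<le> bprob mu0 w" using pp by (simp add: bprob_def)
  have s2: "\<And>r. 0 \<le> sig2 Mstar r" "\<And>r. sig2 Mstar r \<le> 1" by (simp_all add: Mstar_def)
  show ?thesis
    unfolding UA_def expect_alt Mstar_simps(1) bprob0
  proof (cases "act1 s False")
    case False
    have o1: "\<And>w1. o1f s False w1 = None" using False by (simp add: o1f_def)
    have r1: "\<And>w1. r1f s False w1 = None" by (simp add: r1f_def o1)
    have e2: "\<And>w1 a2. e2f s False w1 a2 = act2 s False None a2" by (simp add: e2f_def o1)
    let ?e = "act2 s False None True"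
    have "\<And>w1. (\<Sum>w2\<in>UNIV. prior mu0 rho w1 w2 * (of_bool (xf Mstar s False w1 True w2) - c * (of_bool (act1 s False) + of_bool (e2f s False w1 True))))
       \<le> (\<Sum>w2\<in>UNIV. prior mu0 rho w1 w2 * (of_bool ?e * (of_bool w2 - c)))"
    proof (rule prior_mono[OF pp])
      fix w1 w2
      show "of_bool (xf Mstar s False w1 True w2) - c * (of_bool (act1 s False) + of_bool (e2f s False w1 True))
          \<le> of_bool ?e * (of_bool w2 - c)"
        using xf_Mstar[of s False w1 True w2] False e2 by (cases ?e; cases w2) auto
    qed
    then have "(\<Sum>w1\<in>UNIV. (\<Sum>w2\<in>UNIV. prior mu0 rho w1 w2 * (of_bool (xf Mstar s False w1 True w2) - c * (of_bool (act1 s False) + of_bool (e2f s False w1 True)))))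
       \<le> (\<Sum>w1\<in>UNIV. \<Sum>w2\<in>UNIV. prior mu0 rho w1 w2 * (of_bool ?e * (of_bool w2 - c)))"
      by (rule sum_mono)
    also have "\<dots> \<le> mu2_empty mu0 rho - c"
      using p by (cases ?e) (simp_all add: sumb prior_def bprob_def mu2_empty_def algebra_simps)
    finally show "(\<Sum>w1\<in>UNIV. \<Sum>a2\<in>UNIV. bprob (sig2 Mstar (r1f s False w1)) a2 *
        (\<Sum>w2\<in>UNIV. prior mu0 rho w1 w2 * (of_bool (xf Mstar s False w1 a2 w2) - c * (of_bool (act1 s False) + of_bool (e2f s False w1 a2)))))
        \<le> mu2_empty mu0 rho - c"
      by (simp only: r1 Mstar_simps(2) bprob1)
  next
    case True
    have "\<And>w1. (\<Sum>a2\<in>UNIV. bprob (sig2 Mstar (r1f s False w1)) a2 *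
        (\<Sum>w2\<in>UNIV. prior mu0 rho w1 w2 * (of_bool (xf Mstar s False w1 a2 w2) - c * (of_bool (act1 s False) + of_bool (e2f s False w1 a2)))))
        \<le> (\<Sum>w2\<in>UNIV. prior mu0 rho w1 w2 * (of_bool w2 - c))"
    proof (rule wavg[OF s2])
      fix w1 a2
      show "(\<Sum>w2\<in>UNIV. prior mu0 rho w1 w2 * (of_bool (xf Mstar s False w1 a2 w2) - c * (of_bool (act1 s False) + of_bool (e2f s False w1 a2))))
        \<le> (\<Sum>w2\<in>UNIV. prior mu0 rho w1 w2 * (of_bool w2 - c))"
      proof (rule prior_mono[OF pp])
        fix w2
        show "of_bool (xf Mstar s False w1 a2 w2) - c * (of_bool (act1 s False) + of_bool (e2f s False w1 a2))
          \<le> of_bool w2 - c"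
          using xf_Mstar[of s False w1 a2 w2] True p by (cases "e2f s False w1 a2"; cases w2) auto
      qed
    qed
    then have "(\<Sum>w1\<in>UNIV. \<Sum>a2\<in>UNIV. bprob (sig2 Mstar (r1f s False w1)) a2 *
        (\<Sum>w2\<in>UNIV. prior mu0 rho w1 w2 * (of_bool (xf Mstar s False w1 a2 w2) - c * (of_bool (act1 s False) + of_bool (e2f s False w1 a2)))))
        \<le> (\<Sum>w1\<in>UNIV. \<Sum>w2\<in>UNIV. prior mu0 rho w1 w2 * (of_bool w2 - c))"
      by (rule sum_mono)
    also have "\<dots> = mu2_empty mu0 rho - c"
      by (simp add: sumb prior_def bprob_def mu2_empty_def algebra_simps)
    finally show "(\<Sum>w1\<in>UNIV. \<Sum>a2\<in>UNIV. bprob (sig2 Mstar (r1f s False w1)) a2 *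
        (\<Sum>w2\<in>UNIV. prior mu0 rho w1 w2 * (of_bool (xf Mstar s False w1 a2 w2) - c * (of_bool (act1 s False) + of_bool (e2f s False w1 a2)))))
        \<le> mu2_empty mu0 rho - c" .
  qed
qed

lemma UA_star: "UA mu0 rho c Mstar obedient = mu2_empty mu0 rho - c"
  by (simp add: UA_def expect_def Let_def sumb Mstar_def obedient_def bprob_def prior_def mu2_empty_def algebra_simps)

lemma UP_star: "UP mu0 rho k Mstar obedient = 1 - k"
  by (simp add: UP_def expect_def Let_def sumb Mstar_def obedient_def bprob_def prior_def algebra_simps)

lemma outcome_star: "outcome_prob mu0 rho Mstar obedient oc = baseline_prob mu0 rho oc"
  by (cases oc) (auto simp add: outcome_prob_def baseline_prob_def expect_def Let_def sumb Mstar_def obedient_def bprob_def prior_def algebra_simps)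

theorem lemmaC2:
  fixes mu0 rho c k :: real
  assumes "0 < mu0" "mu0 < 1" "1/2 < rho" "rho < 1" "0 < c" "0 < k"
    and "1 - rho < k" "k \<le> min (mu2_empty mu0 rho) (1 - mu2_empty mu0 rho)"
    and "c \<le> mu2_empty mu0 rho"
  shows "best_response mu0 rho c Mstar obedient
    \<and> (\<forall>oc. outcome_prob mu0 rho Mstar obedient oc = baseline_prob mu0 rho oc)
    \<and> (\<forall>M s. valid_mech M \<longrightarrow> best_response mu0 rho c M s \<longrightarrow>
           UP mu0 rho k M s \<le> UP mu0 rho k Mstar obedient)"
  using part1[OF assms(1-5,9)] part3[OF _ assms(1-4,6-8)] outcome_star
  by (auto simp: best_response_def UA_star UP_star)

end
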